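(* Let $S$ be a nonnegative relation in $\mathfrak H$ with $\mathcal W(S)=\{0\}$, and let $H$ be a selfadjoint extension of $S$. Then $\mathcal W(H)=\{0\}$ if and only if $H$ is a nonnegative extremal extension of $S$ (extremal with respect to $0$).
   Context: Linear relations in $\mathfrak H$ are linear subspaces of $\mathfrak H\times\mathfrak H$; $T^*$ adjoint; selfadjoint means $T=T^*$. Numerical range $\mathcal W(T)=\{(\varphi',\varphi):\{\varphi,\varphi'\}\in T,\|\varphi\|=1\}$ (and $\{0\}$ if $\mathrm{dom}\,T=\{0\}$). $S$ nonnegative means $(\varphi',\varphi)\ge0$ for all $\{\varphi,\varphi'\}\in S$. A selfadjoint extension $H$ of $S$ is extremal with respect to $0$ if for every $\{f,f'\}\in H$, $\inf\{(f'-h',f-h):\{h,h'\}\in S\}=0$. *)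

theory Defs
  imports "HOL-Analysis.Analysis"
begin

text \<open>The inner product is linear in the first argument and conjugate-linear in the second,
  matching the convention (phi', phi) of the paper.\<close>

class chilbert_space = ab_group_add +
  fixes scaleC :: "complex \<Rightarrow> 'a \<Rightarrow> 'a"
    and cinner :: "'a \<Rightarrow> 'a \<Rightarrow> complex"
  assumes scaleC_add_right: "scaleC a (x + y) = scaleC a x + scaleC a y"
    and scaleC_add_left: "scaleC (a + b) x = scaleC a x + scaleC b x"
    and scaleC_scaleC: "scaleC a (scaleC b x) = scaleC (a * b) x"
    and scaleC_one: "scaleC 1 x = x"
    and cinner_add_left: "cinner (x + y) z = cinner x z + cinner y z"
    and cinner_scaleC_left: "cinner (scaleC a x) y = a * cinner x y"
    and cinner_commute: "cinner y x = cnj (cinner x y)"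
    and cinner_self_real: "Im (cinner x x) = 0"
    and cinner_self_nonneg: "0 \<le> Re (cinner x x)"
    and cinner_self_eq_zero: "cinner x x = 0 \<longleftrightarrow> x = 0"
    and complete:
      "(\<forall>e::real>0. \<exists>N::nat. \<forall>m\<ge>N. \<forall>n\<ge>N. sqrt (Re (cinner (X m - X n) (X m - X n))) < e)
        \<Longrightarrow> (\<exists>L. \<forall>e>0. \<exists>N::nat. \<forall>n\<ge>N. sqrt (Re (cinner (X n - L) (X n - L))) < e)"

definition cnorm :: "'a::chilbert_space \<Rightarrow> real" where
  "cnorm x = sqrt (Re (cinner x x))"

text \<open>A linear relation in H is a linear subspace of H \<times> H; pairs (f, f') stand for {f, f'}.\<close>

definition linear_relation :: "('a::chilbert_space \<times> 'a) set \<Rightarrow> bool" where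
  "linear_relation T \<longleftrightarrow> (0, 0) \<in> T
     \<and> (\<forall>p\<in>T. \<forall>q\<in>T. p + q \<in> T)
     \<and> (\<forall>c. \<forall>(f, f')\<in>T. (scaleC c f, scaleC c f') \<in> T)"

definition rel_dom :: "('a \<times> 'a) set \<Rightarrow> 'a set" where
  "rel_dom T = fst ` T"

definition adjoint :: "('a::chilbert_space \<times> 'a) set \<Rightarrow> ('a \<times> 'a) set" where
  "adjoint T = {(g, g'). \<forall>(f, f')\<in>T. cinner f' g = cinner f g'}"

definition selfadjoint :: "('a::chilbert_space \<times> 'a) set \<Rightarrow> bool" where
  "selfadjoint T \<longleftrightarrow> T = adjoint T"

definition numerical_range :: "('a::chilbert_space \<times> 'a) set \<Rightarrow> complex set" where
  "numerical_range T =
     (if rel_dom T = {0} then {0}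
      else {cinner f' f | f f'. (f, f') \<in> T \<and> cnorm f = 1})"

definition nonnegative :: "('a::chilbert_space \<times> 'a) set \<Rightarrow> bool" where
  "nonnegative T \<longleftrightarrow> (\<forall>(f, f')\<in>T. Im (cinner f' f) = 0 \<and> 0 \<le> Re (cinner f' f))"

text \<open>Extremality with respect to 0.  For a selfadjoint extension H of S the numbers
  (f' - h', f - h) are real, so the infimum is taken (in the extended reals) over their real parts.\<close>

definition extremal :: "('a::chilbert_space \<times> 'a) set \<Rightarrow> ('a \<times> 'a) set \<Rightarrow> bool" where
  "extremal S H \<longleftrightarrow>
     (\<forall>(f, f')\<in>H. (INF (h, h')\<in>S. ereal (Re (cinner (f' - h') (f - h)))) = 0)"

end

theory Submission
  imports Defs
begin

context chilbert_space begin

lemma cinner_zero_left[simp]: "cinner 0 z = 0"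
proof -
  have "cinner (0+0) z = cinner 0 z + cinner 0 z" by (rule cinner_add_left)
  thus ?thesis by simp
qed

lemma cinner_zero_right[simp]: "cinner z 0 = 0"
proof -
  have "cinner z 0 = cnj (cinner 0 z)" by (rule cinner_commute)
  thus ?thesis by simp
qed

lemma cinner_add_right: "cinner x (y + z) = cinner x y + cinner x z"
proof -
  have "cinner x (y + z) = cnj (cinner (y + z) x)" by (rule cinner_commute)
  also have "\<dots> = cnj (cinner y x) + cnj (cinner z x)" by (simp add: cinner_add_left)
  also have "cnj (cinner y x) = cinner x y" by (rule cinner_commute[symmetric])
  also have "cnj (cinner z x) = cinner x z" by (rule cinner_commute[symmetric])
  finally show ?thesis .
qed

lemma cinner_scaleC_right: "cinner x (scaleC a y) = cnj a * cinner x y"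
proof -
  have "cinner x (scaleC a y) = cnj (cinner (scaleC a y) x)" by (rule cinner_commute)
  also have "\<dots> = cnj a * cnj (cinner y x)" by (simp add: cinner_scaleC_left)
  also have "cnj (cinner y x) = cinner x y" by (rule cinner_commute[symmetric])
  finally show ?thesis .
qed

lemma cinner_minus_left: "cinner (- x) y = - cinner x y"
proof -
  have "cinner (x + - x) y = cinner x y + cinner (-x) y" by (rule cinner_add_left)
  thus ?thesis by (simp add: complex_eq_iff)
qed

lemma cinner_minus_right: "cinner y (- x) = - cinner y x"
proof -
  have "cinner y (- x) = cnj (cinner (- x) y)" by (rule cinner_commute)
  also have "\<dots> = - cnj (cinner x y)" by (simp add: cinner_minus_left)
  also have "cnj (cinner x y) = cinner y x" by (rule cinner_commute[symmetric])
  finally show ?thesis .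
qed

lemma cinner_diff_left: "cinner (x - y) z = cinner x z - cinner y z"
  by (simp only: diff_conv_add_uminus cinner_add_left cinner_minus_left) simp

lemma cinner_diff_right: "cinner z (x - y) = cinner z x - cinner z y"
  by (simp only: diff_conv_add_uminus cinner_add_right cinner_minus_right) simp

lemma scaleC_zero[simp]: "scaleC 0 x = 0"
proof -
  have "scaleC (0+0) x = scaleC 0 x + scaleC 0 x" by (rule scaleC_add_left)
  thus ?thesis by simp
qed

lemma scaleC_m1: "scaleC (-1) x = - x"
proof -
  have "scaleC (-1 + 1) x = scaleC (-1) x + scaleC 1 x" by (rule scaleC_add_left)
  thus ?thesis by (simp add: scaleC_one eq_neg_iff_add_eq_0)
qed

end

lemma lin_diff:
  assumes lin: "linear_relation T" and "(f, f') \<in> T" "(h, h') \<in> T"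
  shows "(f - h, f' - h') \<in> T"
proof -
  have "(scaleC (-1) h, scaleC (-1) h') \<in> T" using lin assms(3) unfolding linear_relation_def by blast
  hence "(-h, -h') \<in> T" by (simp add: scaleC_m1)
  hence "(f, f') + (-h, -h') \<in> T" using lin assms(2) unfolding linear_relation_def by blast
  thus ?thesis by simp
qed

lemma adjoint_linear: "linear_relation (adjoint T)"
  unfolding linear_relation_def adjoint_def
  by (fastforce simp: cinner_add_right cinner_scaleC_right)

lemma Re_pos: "(f::'a::chilbert_space) \<noteq> 0 \<Longrightarrow> 0 < Re (cinner f f)"
proof -
  assume f: "f \<noteq> 0"
  have "cinner f f \<noteq> 0" using f cinner_self_eq_zero by blast
  hence "Re (cinner f f) \<noteq> 0" using cinner_self_real[of f] by (auto simp: complex_eq_iff)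
  thus ?thesis using cinner_self_nonneg[of f] by linarith
qed

lemma cinner_scale_real:
  "cinner (scaleC (complex_of_real r) g) (scaleC (complex_of_real r) (f::'a::chilbert_space))
     = complex_of_real (r * r) * cinner g f"
  by (simp add: cinner_scaleC_left cinner_scaleC_right mult.assoc)

lemma normalize:
  assumes f: "(f::'a::chilbert_space) \<noteq> 0"
  shows "\<exists>r>0. cnorm (scaleC (complex_of_real r) f) = 1"
proof -
  have fpos: "0 < Re (cinner f f)" using Re_pos[OF f] .
  define r where "r = 1 / sqrt (Re (cinner f f))"
  have rpos: "r > 0" unfolding r_def using fpos by simp
  have rr: "r * r * Re (cinner f f) = 1" unfolding r_def using fpos
    by (simp add: field_simps)
  have "Re (complex_of_real (r * r) * cinner f f) = r * r * Re (cinner f f)"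
    by simp
  hence "Re (cinner (scaleC (complex_of_real r) f) (scaleC (complex_of_real r) f)) = 1"
    using rr by (simp only: cinner_scale_real)
  hence "cnorm (scaleC (complex_of_real r) f) = 1" unfolding cnorm_def by simp
  thus ?thesis using rpos by blast
qed

lemma W_zero_imp:
  fixes T :: "('a::chilbert_space \<times> 'a) set"
  assumes lin: "linear_relation T" and W: "numerical_range T = {0}" and ff: "(f, f') \<in> T"
  shows "cinner f' f = 0"
proof (cases "f = 0")
  case True thus ?thesis by simp
next
  case False
  have nd: "rel_dom T \<noteq> {0}" using ff False unfolding rel_dom_def by force
  obtain r where rpos: "r > 0" and n1: "cnorm (scaleC (complex_of_real r) f) = 1"
    using normalize[OF False] by blast
  have mem: "(scaleC (complex_of_real r) f, scaleC (complex_of_real r) f') \<in> T"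
    using lin ff unfolding linear_relation_def by blast
  hence "cinner (scaleC (complex_of_real r) f') (scaleC (complex_of_real r) f) \<in> numerical_range T"
    unfolding numerical_range_def using nd n1 by auto
  hence "complex_of_real (r * r) * cinner f' f = 0" using W
    by (simp only: cinner_scale_real) simp
  thus ?thesis using rpos by simp
qed

lemma W_zero_intro:
  fixes T :: "('a::chilbert_space \<times> 'a) set"
  assumes lin: "linear_relation T" and all: "\<And>f f'. (f, f') \<in> T \<Longrightarrow> cinner f' f = 0"
  shows "numerical_range T = {0}"
proof (cases "rel_dom T = {0}")
  case True thus ?thesis unfolding numerical_range_def by simp
next
  case nd: False
  have "(0,0) \<in> T" using lin unfolding linear_relation_def by blast
  then obtain f f' where ff: "(f, f') \<in> T" and False: "f \<noteq> 0" using nd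
    unfolding rel_dom_def by force
  obtain r where rpos: "r > 0" and n1: "cnorm (scaleC (complex_of_real r) f) = 1"
    using normalize[OF False] by blast
  have mem: "(scaleC (complex_of_real r) f, scaleC (complex_of_real r) f') \<in> T"
    using lin ff unfolding linear_relation_def by blast
  hence "0 \<in> {cinner f' f | f f'. (f, f') \<in> T \<and> cnorm f = 1}"
    using n1 all[OF mem] by force
  moreover have "{cinner f' f | f f'. (f, f') \<in> T \<and> cnorm f = 1} \<subseteq> {0}" using all by auto
  ultimately show ?thesis unfolding numerical_range_def using nd by auto
qed

theorem proposition8p3:
  fixes S H :: "('a::chilbert_space \<times> 'a) set"
  assumes "linear_relation S"
    and "nonnegative S"
    and "numerical_range S = {0}"
    and "selfadjoint H"
    and "S \<subseteq> H"
  shows "numerical_range H = {0} \<longleftrightarrow> nonnegative H \<and> extremal S H"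
proof -
  have linH: "linear_relation H" using assms(4) adjoint_linear unfolding selfadjoint_def by metis
  have S0: "(0,0) \<in> S" using assms(1) unfolding linear_relation_def by blast
  show ?thesis
  proof
    assume WH: "numerical_range H = {0}"
    have z: "\<And>f f'. (f, f') \<in> H \<Longrightarrow> cinner f' f = 0" using W_zero_imp[OF linH WH] by blast
    have "nonnegative H" unfolding nonnegative_def using z by auto
    moreover have "extremal S H" unfolding extremal_def
    proof (clarify)
      fix f f' assume ff: "(f, f') \<in> H"
      have "(INF (h, h')\<in>S. ereal (Re (cinner (f' - h') (f - h)))) = (INF p\<in>S. 0)"
      proof (rule INF_cong)
        fix p assume "p \<in> S"
        then obtain h h' where p: "p = (h,h')" "(h,h') \<in> H" using assms(5) by (cases p) auto
        show "(case p of (h, h') \<Rightarrow> ereal (Re (cinner (f' - h') (f - h)))) = 0"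
          using z[OF lin_diff[OF linH ff p(2)]] p(1) by (simp add: zero_ereal_def)
      qed simp
      also have "\<dots> = 0" using S0 by (subst INF_const) auto
      finally show "(INF (h, h')\<in>S. ereal (Re (cinner (f' - h') (f - h)))) = 0" .
    qed
    ultimately show "nonnegative H \<and> extremal S H" by blast
  next
    assume R: "nonnegative H \<and> extremal S H"
    have zS: "\<And>h h'. (h, h') \<in> S \<Longrightarrow> cinner h' h = 0" using W_zero_imp[OF assms(1) assms(3)] by blast
    have adj: "\<And>f f' h h'. (f, f') \<in> H \<Longrightarrow> (h, h') \<in> H \<Longrightarrow> cinner f' h = cinner f h'"
      using assms(4) unfolding selfadjoint_def adjoint_def by blast
    have z: "cinner f' f = 0" if ff: "(f, f') \<in> H" for f f'
    proof -
      let ?v = "\<lambda>h h'. Re (cinner f' f) - 2 * Re (cinner f' h)"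
      have val: "Re (cinner (f' - h') (f - h)) = ?v h h'" if hh: "(h, h') \<in> S" for h h'
      proof -
        have "cinner h' f = cnj (cinner f' h)"
          using adj[OF ff, of h h'] hh assms(5) cinner_commute[of f h'] by auto
        thus ?thesis using zS[OF hh]
          by (simp add: cinner_diff_left cinner_diff_right)
      qed
      have E: "(INF (h, h')\<in>S. ereal (Re (cinner (f' - h') (f - h)))) = 0"
        using R ff unfolding extremal_def by blast
      have ge: "0 \<le> ?v h h'" if hh: "(h, h') \<in> S" for h h'
      proof -
        have "(INF (h, h')\<in>S. ereal (Re (cinner (f' - h') (f - h)))) \<le> ereal (Re (cinner (f' - h') (f - h)))"
          using INF_lower[OF hh, of "\<lambda>(h, h'). ereal (Re (cinner (f' - h') (f - h)))"] by simp
        thus ?thesis using E val[OF hh] by (simp add: zero_ereal_def)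
      qed
      have a0: "Re (cinner f' h) = 0" if hh: "(h, h') \<in> S" for h h'
      proof (rule ccontr)
        assume a: "Re (cinner f' h) \<noteq> 0"
        define t where "t = (Re (cinner f' f) + 1) / (2 * Re (cinner f' h))"
        have "(scaleC (complex_of_real t) h, scaleC (complex_of_real t) h') \<in> S"
          using assms(1) hh unfolding linear_relation_def by blast
        from ge[OF this] have "0 \<le> Re (cinner f' f) - 2 * (t * Re (cinner f' h))"
          by (simp add: cinner_scaleC_right)
        also have "2 * (t * Re (cinner f' h)) = Re (cinner f' f) + 1" unfolding t_def using a by simp
        finally show False by simp
      qed
      have "(INF (h, h')\<in>S. ereal (Re (cinner (f' - h') (f - h)))) = (INF p\<in>S. ereal (Re (cinner f' f)))"
      proof (rule INF_cong)
        fix p assume "p \<in> S"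
        then obtain h h' where p: "p = (h,h')" "(h,h') \<in> S" by (cases p) auto
        show "(case p of (h, h') \<Rightarrow> ereal (Re (cinner (f' - h') (f - h)))) = ereal (Re (cinner f' f))"
          using val[OF p(2)] a0[OF p(2)] p(1) by simp
      qed simp
      also have "\<dots> = ereal (Re (cinner f' f))" using S0 by (subst INF_const) auto
      finally have re: "Re (cinner f' f) = 0" using E by (simp add: zero_ereal_def)
      have "Im (cinner f' f) = 0" using R ff unfolding nonnegative_def by blast
      thus ?thesis using re by (simp add: complex_eq_iff)
    qed
    show "numerical_range H = {0}" using W_zero_intro[OF linH] z by blast
  qed
qed

end
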